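(* Assume $\|\nabla f_t(x)\|_\infty\le G_\infty$ for all $t\in[n]$, $x\in\mathcal D$, where $\min\{G,G_\infty,B\}\ge1$ and $\alpha>0$. Let $\phi=\sqrt{70(8G^2B^2\alpha+G^2B^2+1/\alpha)}$, $C_n>0$, and assume $\lambda\ge d^{1.5}\phi\,n^{1/3}/C_n^{1/3}$. Let $[i_s,i_t]\in\mathcal P$ be a bin of the key partition such that, across some coordinate $k\in[d]$, the offline optimal takes the form of Structure 1 or Structure 2 on some sub-interval of $[i_s,i_t]$. Let $$\mu_{\mathrm{th}}=\sqrt{\frac{140d^{1.5}(8G^2B^2\alpha+G^2B^2+1/\alpha)G_\infty C_n^{1/3}\log n}{G^2\phi\,n^{1/3}}}.$$ If $C_n\le\left(\frac{B^2G^2\phi}{560d^{1.5}(8G^2B^2\alpha+G^2B^2+1/\alpha)G_\infty\log n}\right)^3n$, then $\mathrm{GAP}_{\min}(-B,[i_s,i_t])[k]\vee\mathrm{GAP}_{\min}(B,[i_s,i_t])[k]\ge\mu_{\mathrm{th}}$.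
   Context: $\mathcal D=\{x\in\mathbb R^d:\|x\|_\infty\le B\}$; $[a,b]=\{a,\dots,b\}$; $a\vee b=\max\{a,b\}$; $G>0$; $f_1,\dots,f_n$ are differentiable convex functions on $\mathcal D$ (the surrogate losses $f_t(x)=(\sqrt{\alpha/2}\nabla\ell_t(x_t)^T(x-x_t)+1/\sqrt{2\alpha})^2$). Offline optimal: given $C_n>0$, $u_1,\dots,u_n\in\mathbb R^d$ is an optimal solution of: minimize $\sum_{t=1}^nf_t(\tilde u_t)$ subject to $\sum_{t=2}^n\|\tilde u_t-\tilde u_{t-1}\|_1\le C_n$ and $\|\tilde u_t\|_\infty\le B$; $\lambda\ge0$ and $\gamma^\pm_t\in\mathbb R^d_{\ge0}$ are optimal dual variables satisfying: there are $s_t\in[-1,1]^d$ with $s_t[k]=\mathrm{sign}(u_{t+1}[k]-u_t[k])$ whenever nonzero, $s_0=s_n=0$, $\nabla f_t(u_t)=\lambda(s_t-s_{t-1})+\gamma^-_t-\gamma^+_t$, $\lambda(\sum_{t=2}^n\|u_t-u_{t-1}\|_1-C_n)=0$, $\gamma^-_t[k](u_t[k]+B)=0$, $\gamma^+_t[k](u_t[k]-B)=0$. Structure 1 across coordinate $k$ on $[a,b]\subseteq\{2,\dots,n-1\}$: $u_j[k]=u_a[k]\in(-B,B)$ for all $j\in[a,b]$, $u_b[k]>u_{b+1}[k]$ and $u_a[k]>u_{a-1}[k]$. Structure 2: same but with $u_b[k]<u_{b+1}[k]$ and $u_a[k]<u_{a-1}[k]$. $\mathrm{GAP}_{\min}(\beta,[a,b])[k]=\min_{j\in[a,b]}|u_j[k]-\beta|$.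 Key partition $\mathcal P$: $[n]$ is partitioned greedily into consecutive bins: the first bin starts at $i_s=1$; a bin starting at $i_s$ ends at the largest $i_t\in[i_s,n]$ with $\sum_{j=i_s+1}^{i_t}\|u_j-u_{j-1}\|_1\le B/\sqrt{i_t-i_s+1}$; the next bin starts at $i_t+1$, until $n$ is covered. *)

theory Defs
  imports "HOL-Analysis.Analysis"
begin

text \<open>Vectors in R^d are rendered as real^'d for a finite index type 'd, so d = CARD('d).
  Time indices are natural numbers; only t in {1..n} matter.\<close>

definition l1norm :: "real^'d \<Rightarrow> real" where
  "l1norm x = (\<Sum>k\<in>UNIV. \<bar>x $ k\<bar>)"

definition box_D :: "real \<Rightarrow> (real^'d) set" where
  "box_D B = {x. \<forall>k. \<bar>x $ k\<bar> \<le> B}"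

text \<open>Surrogate loss f_t(x) = (sqrt(alpha/2) g^T (x - x_t) + 1/sqrt(2 alpha))^2,
  where g = grad l_t(x_t).\<close>
definition surrogate :: "real \<Rightarrow> real^'d \<Rightarrow> real^'d \<Rightarrow> real^'d \<Rightarrow> real" where
  "surrogate \<alpha> g xt x = (sqrt (\<alpha>/2) * (g \<bullet> (x - xt)) + 1 / sqrt (2*\<alpha>))^2"

definition path_len :: "(nat \<Rightarrow> real^'d) \<Rightarrow> nat \<Rightarrow> nat \<Rightarrow> real" where
  "path_len u a b = (\<Sum>j\<in>{a+1..b}. l1norm (u j - u (j-1)))"

definition feasible :: "nat \<Rightarrow> real \<Rightarrow> real \<Rightarrow> (nat \<Rightarrow> real^'d) \<Rightarrow> bool" where
  "feasible n B Cn v \<longleftrightarrow> path_len v 1 n \<le> Cn \<and> (\<forall>t\<in>{1..n}. v t \<in> box_D B)"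

definition offline_optimal ::
  "(nat \<Rightarrow> real^'d \<Rightarrow> real) \<Rightarrow> nat \<Rightarrow> real \<Rightarrow> real \<Rightarrow> (nat \<Rightarrow> real^'d) \<Rightarrow> bool" where
  "offline_optimal f n B Cn u \<longleftrightarrow> feasible n B Cn u \<and>
     (\<forall>v. feasible n B Cn v \<longrightarrow> (\<Sum>t=1..n. f t (u t)) \<le> (\<Sum>t=1..n. f t (v t)))"

definition kkt_dual ::
  "(nat \<Rightarrow> real^'d \<Rightarrow> real^'d) \<Rightarrow> nat \<Rightarrow> real \<Rightarrow> real \<Rightarrow> (nat \<Rightarrow> real^'d) \<Rightarrow> real
     \<Rightarrow> (nat \<Rightarrow> real^'d) \<Rightarrow> (nat \<Rightarrow> real^'d) \<Rightarrow> bool" where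
  "kkt_dual gradf n B Cn u lam \<gamma>m \<gamma>p \<longleftrightarrow>
     lam \<ge> 0 \<and> (\<forall>t\<in>{1..n}. \<forall>k. \<gamma>m t $ k \<ge> 0 \<and> \<gamma>p t $ k \<ge> 0) \<and>
     (\<exists>s :: nat \<Rightarrow> real^'d.
        (\<forall>t\<in>{0..n}. \<forall>k. -1 \<le> s t $ k \<and> s t $ k \<le> 1) \<and>
        (\<forall>t\<in>{1..<n}. \<forall>k. u (t+1) $ k - u t $ k \<noteq> 0 \<longrightarrow>
              s t $ k = sgn (u (t+1) $ k - u t $ k)) \<and>
        s 0 = 0 \<and> s n = 0 \<and>
        (\<forall>t\<in>{1..n}. gradf t (u t) = lam *\<^sub>R (s t - s (t-1)) + \<gamma>m t - \<gamma>p t)) \<and>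
     lam * (path_len u 1 n - Cn) = 0 \<and>
     (\<forall>t\<in>{1..n}. \<forall>k. \<gamma>m t $ k * (u t $ k + B) = 0 \<and> \<gamma>p t $ k * (u t $ k - B) = 0)"

definition bin_end :: "real \<Rightarrow> (nat \<Rightarrow> real^'d) \<Rightarrow> nat \<Rightarrow> nat \<Rightarrow> nat" where
  "bin_end B u n i0 = (GREATEST i1. i0 \<le> i1 \<and> i1 \<le> n \<and>
      path_len u i0 i1 \<le> B / sqrt (real (i1 - i0 + 1)))"

inductive key_bin :: "real \<Rightarrow> (nat \<Rightarrow> real^'d) \<Rightarrow> nat \<Rightarrow> nat \<Rightarrow> nat \<Rightarrow> bool"
  for B u n where
  first: "1 \<le> n \<Longrightarrow> key_bin B u n 1 (bin_end B u n 1)"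
| step: "key_bin B u n a b \<Longrightarrow> b < n \<Longrightarrow> key_bin B u n (b+1) (bin_end B u n (b+1))"

definition structure1 :: "nat \<Rightarrow> real \<Rightarrow> (nat \<Rightarrow> real^'d) \<Rightarrow> 'd \<Rightarrow> nat \<Rightarrow> nat \<Rightarrow> bool" where
  "structure1 n B u k a b \<longleftrightarrow> 2 \<le> a \<and> a \<le> b \<and> b \<le> n - 1 \<and>
     (\<forall>j\<in>{a..b}. u j $ k = u a $ k) \<and> -B < u a $ k \<and> u a $ k < B \<and>
     u b $ k > u (b+1) $ k \<and> u a $ k > u (a-1) $ k"

definition structure2 :: "nat \<Rightarrow> real \<Rightarrow> (nat \<Rightarrow> real^'d) \<Rightarrow> 'd \<Rightarrow> nat \<Rightarrow> nat \<Rightarrow> bool" where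
  "structure2 n B u k a b \<longleftrightarrow> 2 \<le> a \<and> a \<le> b \<and> b \<le> n - 1 \<and>
     (\<forall>j\<in>{a..b}. u j $ k = u a $ k) \<and> -B < u a $ k \<and> u a $ k < B \<and>
     u b $ k < u (b+1) $ k \<and> u a $ k < u (a-1) $ k"

definition gap_min :: "(nat \<Rightarrow> real^'d) \<Rightarrow> real \<Rightarrow> nat \<Rightarrow> nat \<Rightarrow> 'd \<Rightarrow> real" where
  "gap_min u \<beta> a b k = Min ((\<lambda>j. \<bar>u j $ k - \<beta>\<bar>) ` {a..b})"

end

theory Submission
  imports Defs
begin

lemma key_bin_props:
  assumes "key_bin B u n a b" "B \<ge> 0"
  shows "1 \<le> a \<and> a \<le> b \<and> b \<le> n \<and> path_len u a b \<le> B / sqrt (real (b - a + 1))"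
  using assms(1)
proof (induction rule: key_bin.induct)
  have gen: "i0 \<le> n \<Longrightarrow> i0 \<le> bin_end B u n i0 \<and> bin_end B u n i0 \<le> n \<and>
     path_len u i0 (bin_end B u n i0) \<le> B / sqrt (real (bin_end B u n i0 - i0 + 1))" for i0
  proof -
    assume h: "i0 \<le> n"
    let ?P = "\<lambda>i1. i0 \<le> i1 \<and> i1 \<le> n \<and> path_len u i0 i1 \<le> B / sqrt (real (i1 - i0 + 1))"
    have p0: "?P i0" using h assms(2) by (simp add: path_len_def)
    have "?P (Greatest ?P)" by (rule GreatestI_nat[of ?P i0 n]) (use p0 in auto)
    then show ?thesis unfolding bin_end_def by blast
  qed
  {
    case first
    then show ?case using gen[of 1] by auto
  next
    case (step a b)
    then show ?case using gen[of "b+1"] by auto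
  }
qed

lemma path_len_mono:
  assumes "i0 \<le> i" "j \<le> j0"
  shows "path_len u i j \<le> path_len u i0 j0"
  unfolding path_len_def
  by (rule sum_mono2) (use assms in \<open>auto simp: l1norm_def intro: sum_nonneg\<close>)

lemma comp_le_l1: "\<bar>x $ k\<bar> \<le> l1norm x"
  unfolding l1norm_def by (rule member_le_sum) auto

lemma coord_diff_le:
  assumes "i \<le> j"
  shows "\<bar>u j $ k - u i $ k\<bar> \<le> path_len u i j"
  using assms
proof (induction j rule: dec_induct)
  case base
  then show ?case by (simp add: path_len_def)
next
  case (step m)
  have "path_len u i (Suc m) = path_len u i m + l1norm (u (Suc m) - u m)"
    unfolding path_len_def using step(1) by (simp add: add.commute)
  moreover have "\<bar>u (Suc m) $ k - u m $ k\<bar> \<le> l1norm (u (Suc m) - u m)"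
    using comp_le_l1[of "u (Suc m) - u m" k] by simp
  ultimately show ?case using step(3) by linarith
qed

lemma telescope:
  fixes h :: "nat \<Rightarrow> real"
  assumes "1 \<le> a" "a \<le> b"
  shows "(\<Sum>t=a..b. h t - h (t-1)) = h b - h (a-1)"
  using assms(2)
proof (induction b rule: dec_induct)
  case base
  then show ?case by simp
next
  case (step m)
  then show ?case by (simp add: sum.cl_ivl_Suc)
qed

theorem mainTheorem16:
  fixes n :: nat and B G Ginf \<alpha> Cn lam :: real
    and g xt :: "nat \<Rightarrow> real^'d"
    and f :: "nat \<Rightarrow> real^'d \<Rightarrow> real"
    and gradf :: "nat \<Rightarrow> real^'d \<Rightarrow> real^'d"
    and u \<gamma>m \<gamma>p :: "nat \<Rightarrow> real^'d"
    and i_s i_t :: nat and k :: 'd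
  defines "f \<equiv> (\<lambda>t. surrogate \<alpha> (g t) (xt t))"
  defines "\<phi> \<equiv> sqrt (70 * (8*G^2*B^2*\<alpha> + G^2*B^2 + 1/\<alpha>))"
  defines "\<mu>th \<equiv> sqrt ((140 * real CARD('d) powr 1.5 * (8*G^2*B^2*\<alpha> + G^2*B^2 + 1/\<alpha>)
                        * Ginf * Cn powr (1/3) * ln (real n))
                       / (G^2 * \<phi> * real n powr (1/3)))"
  assumes xt_in: "\<forall>t\<in>{1..n}. xt t \<in> box_D B"
    and grad: "\<forall>t\<in>{1..n}. \<forall>x. (f t has_derivative (\<lambda>h. gradf t x \<bullet> h)) (at x)"
    and grad_bound: "\<forall>t\<in>{1..n}. \<forall>x\<in>box_D B. \<forall>j. \<bar>gradf t x $ j\<bar> \<le> Ginf"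
    and G_pos: "G > 0"
    and min_ge1: "min G (min Ginf B) \<ge> 1"
    and alpha_pos: "\<alpha> > 0"
    and Cn_pos: "Cn > 0"
    and opt: "offline_optimal f n B Cn u"
    and dual: "kkt_dual gradf n B Cn u lam \<gamma>m \<gamma>p"
    and lam_ge: "lam \<ge> real CARD('d) powr 1.5 * \<phi> * real n powr (1/3) / Cn powr (1/3)"
    and bin: "key_bin B u n i_s i_t"
    and struct: "\<exists>a b. i_s \<le> a \<and> b \<le> i_t \<and> (structure1 n B u k a b \<or> structure2 n B u k a b)"
    and Cn_small: "Cn \<le> ((B^2 * G^2 * \<phi>) / (560 * real CARD('d) powr 1.5
                        * (8*G^2*B^2*\<alpha> + G^2*B^2 + 1/\<alpha>) * Ginf * ln (real n)))^3 * real n"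
  shows "max (gap_min u (-B) i_s i_t k) (gap_min u B i_s i_t k) \<ge> \<mu>th"
proof -
  define D where "D = real CARD('d) powr 1.5"
  define K where "K = 8*G^2*B^2*\<alpha> + G^2*B^2 + 1/\<alpha>"
  define L where "L = ln (real n)"
  define N3 where "N3 = real n powr (1/3)"
  define C3 where "C3 = Cn powr (1/3)"
  have B1: "B \<ge> 1" and G1: "G \<ge> 1" and Gi1: "Ginf \<ge> 1" using min_ge1 by auto
  obtain a b where ab: "i_s \<le> a" "b \<le> i_t" and st: "structure1 n B u k a b \<or> structure2 n B u k a b"
    using struct by blast
  have abn: "2 \<le> a" "a \<le> b" "b \<le> n - 1" and const: "\<forall>j\<in>{a..b}. u j $ k = u a $ k"
    and ua: "-B < u a $ k" "u a $ k < B"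
    using st unfolding structure1_def structure2_def by auto
  have n3: "n \<ge> 3" using abn by linarith
  have D1: "D \<ge> 1" unfolding D_def by (rule ge_one_powr_ge_zero) auto
  have Kge: "K \<ge> B^2 * G^2" unfolding K_def using alpha_pos G_pos B1
    by (simp add: algebra_simps)
  have B2: "B^2 \<ge> 1" using B1 by (simp add: one_le_power)
  have G2: "G^2 \<ge> 1" using G1 by (simp add: one_le_power)
  have "1 * 1 \<le> B^2 * G^2" by (rule mult_mono) (use B2 G2 in auto)
  then have Bg: "B^2 * G^2 \<ge> 1" by simp
  have Kpos: "K > 0" using Kge Bg by linarith
  have L1: "L \<ge> 1"
  proof -
    have "exp 1 \<le> real n" using exp_le n3 by linarith
    then have "ln (exp 1) \<le> ln (real n)" using n3 by (subst ln_le_cancel_iff) auto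
    then show ?thesis unfolding L_def by simp
  qed
  have phipos: "\<phi> > 0" unfolding \<phi>_def using Kpos K_def by simp
  define Y where "Y = B^2 * G^2 * \<phi> / (560 * D * K * Ginf * L)"
  have Ypos: "Y > 0" unfolding Y_def using Bg phipos D1 Kpos Gi1 L1 by simp
  have N3pos: "N3 > 0" unfolding N3_def using n3 by simp
  have C3pos: "C3 > 0" unfolding C3_def using Cn_pos by simp
  have CnY: "Cn \<le> Y^3 * real n" using Cn_small unfolding Y_def D_def K_def L_def by simp
  have C3le: "C3 \<le> Y * N3"
  proof -
    have "C3 \<le> (Y^3 * real n) powr (1/3)" unfolding C3_def
      by (rule powr_mono2) (use CnY Cn_pos in auto)
    also have "\<dots> = (Y^3) powr (1/3) * N3" unfolding N3_def
      by (rule powr_mult)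
    also have "(Y^3) powr (1/3) * N3 = Y * N3"
    proof -
      have "(Y^3) powr (1/3) = (Y powr 3) powr (1/3)" using Ypos by simp
      also have "\<dots> = Y" using Ypos by (simp only: powr_powr) simp
      finally show ?thesis by simp
    qed
    finally show ?thesis .
  qed
  have lam2: "lam \<ge> 2 * Ginf"
  proof -
    have l0: "lam \<ge> D * \<phi> * N3 / C3" using lam_ge unfolding D_def N3_def C3_def by simp
    have "D * \<phi> * N3 / C3 \<ge> D * \<phi> * N3 / (Y * N3)"
      by (rule divide_left_mono) (use C3le C3pos D1 phipos N3pos in auto)
    also have "D * \<phi> * N3 / (Y * N3) = D * \<phi> / Y" using N3pos by simp
    finally have l1: "lam \<ge> D * \<phi> / Y" using l0 by linarith
    have "2 * Ginf * Y = B^2 * G^2 * \<phi> / (280 * D * K * L)"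
      unfolding Y_def using Gi1 by (simp add: field_simps)
    also have "\<dots> \<le> \<phi> / 280"
    proof -
      have "D * K * L \<ge> 1 * (B^2*G^2) * 1"
        by (intro mult_mono) (use D1 Kge L1 Bg in auto)
      then show ?thesis using phipos Bg by (simp add: field_simps)
    qed
    also have "\<dots> \<le> D * \<phi>" using D1 phipos by (simp add: field_simps)
    finally have "2 * Ginf \<le> D * \<phi> / Y" using Ypos by (simp add: field_simps)
    then show ?thesis using l1 by linarith
  qed
  have mu: "\<mu>th \<le> B / 2"
  proof -
    have eq: "\<mu>th = sqrt (140 * D * K * Ginf * C3 * L / (G^2 * \<phi> * N3))"
      unfolding \<mu>th_def D_def K_def C3_def L_def N3_def by (rule refl)
    have "140 * D * K * Ginf * C3 * L / (G^2 * \<phi> * N3) \<le> 140 * D * K * Ginf * (Y * N3) * L / (G^2 * \<phi> * N3)"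
      by (intro divide_right_mono mult_right_mono mult_left_mono C3le)
        (use D1 Kpos Gi1 L1 G_pos phipos N3pos in auto)
    also have "\<dots> = B^2 / 4" unfolding Y_def using D1 Kpos Gi1 L1 G_pos phipos N3pos
      by (simp add: field_simps)
    finally have "\<mu>th \<le> sqrt (B^2/4)" unfolding eq by simp
    also have "sqrt (B^2/4) = B/2" using B1 by (simp add: real_sqrt_divide)
    finally show ?thesis .
  qed
  from dual obtain s where s1: "\<forall>t\<in>{1..<n}. \<forall>k. u (t+1) $ k - u t $ k \<noteq> 0 \<longrightarrow>
              s t $ k = sgn (u (t+1) $ k - u t $ k)"
    and s2: "\<forall>t\<in>{1..n}. gradf t (u t) = lam *\<^sub>R (s t - s (t-1)) + \<gamma>m t - \<gamma>p t"
    and cs: "\<forall>t\<in>{1..n}. \<forall>k. \<gamma>m t $ k * (u t $ k + B) = 0 \<and> \<gamma>p t $ k * (u t $ k - B) = 0"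
    unfolding kkt_dual_def by blast
  have box: "\<forall>t\<in>{1..n}. u t \<in> box_D B" using opt unfolding offline_optimal_def feasible_def by blast
  have gk: "gradf t (u t) $ k = lam * (s t $ k - s (t-1) $ k)" if t: "t \<in> {a..b}" for t
  proof -
    have t1: "a \<le> t" "t \<le> b" using t by auto
    have tn: "t \<in> {1..n}" using t1 abn by simp
    have "u t $ k = u a $ k" using const t by blast
    then have ne1: "u t $ k + B \<noteq> 0" and ne2: "u t $ k - B \<noteq> 0" using ua by linarith+
    have c1: "\<gamma>m t $ k * (u t $ k + B) = 0" and c2: "\<gamma>p t $ k * (u t $ k - B) = 0"
      using cs tn by blast+
    have g0: "\<gamma>m t $ k = 0" using c1 ne1 by simp
    have g1: "\<gamma>p t $ k = 0" using c2 ne2 by simp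
    have "gradf t (u t) = lam *\<^sub>R (s t - s (t-1)) + \<gamma>m t - \<gamma>p t" using s2 tn by blast
    then have "gradf t (u t) $ k = lam * (s t $ k - s (t-1) $ k) + \<gamma>m t $ k - \<gamma>p t $ k" by simp
    then show ?thesis using g0 g1 by simp
  qed
  have sumg: "(\<Sum>t=a..b. gradf t (u t) $ k) = lam * (s b $ k - s (a-1) $ k)"
  proof -
    have "(\<Sum>t=a..b. gradf t (u t) $ k) = (\<Sum>t=a..b. lam * (s t $ k - s (t-1) $ k))"
      by (rule sum.cong) (simp_all only: gk)
    also have "\<dots> = lam * (\<Sum>t=a..b. s t $ k - s (t-1) $ k)"
      by (rule sum_distrib_left[symmetric])
    also have "(\<Sum>t=a..b. s t $ k - s (t-1) $ k) = s b $ k - s (a-1) $ k"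
      by (rule telescope) (use abn in auto)
    finally show ?thesis .
  qed
  have sdiff: "\<bar>s b $ k - s (a-1) $ k\<bar> = 2"
  proof -
    have b1: "b \<in> {1..<n}" unfolding atLeastLessThan_iff atLeastAtMost_iff using abn n3 by arith
    have a1: "a - 1 \<in> {1..<n}" unfolding atLeastLessThan_iff atLeastAtMost_iff using abn n3 by arith
    have a1': "a - 1 + 1 = a" using abn by simp
    have sb: "u (b+1) $ k - u b $ k \<noteq> 0 \<longrightarrow> s b $ k = sgn (u (b+1) $ k - u b $ k)"
      using s1 b1 by blast
    have sa0: "u (a-1+1) $ k - u (a-1) $ k \<noteq> 0 \<longrightarrow> s (a-1) $ k = sgn (u (a-1+1) $ k - u (a-1) $ k)"
      using s1 a1 by blast
    have sa: "u a $ k - u (a-1) $ k \<noteq> 0 \<longrightarrow> s (a-1) $ k = sgn (u a $ k - u (a-1) $ k)"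
      using sa0 unfolding a1' .
    from st show ?thesis
    proof
      assume "structure1 n B u k a b"
      then have e1: "u b $ k > u (b+1) $ k" and e2: "u a $ k > u (a-1) $ k" unfolding structure1_def by blast+
      then have d1: "u (b+1) $ k - u b $ k < 0" and d2: "u a $ k - u (a-1) $ k > 0" by linarith+
      have "s b $ k = -1" using sb d1 by simp
      moreover have "s (a-1) $ k = 1" using sa d2 by simp
      ultimately show ?thesis by simp
    next
      assume "structure2 n B u k a b"
      then have e1: "u b $ k < u (b+1) $ k" and e2: "u a $ k < u (a-1) $ k" unfolding structure2_def by blast+
      then have d1: "u (b+1) $ k - u b $ k > 0" and d2: "u a $ k - u (a-1) $ k < 0" by linarith+
      have "s b $ k = 1" using sb d1 by simp
      moreover have "s (a-1) $ k = -1" using sa d2 by simp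
      ultimately show ?thesis by simp
    qed
  qed
  have lam0: "lam \<ge> 0" using lam2 Gi1 by linarith
  have "2 * lam = \<bar>\<Sum>t=a..b. gradf t (u t) $ k\<bar>" using sumg sdiff lam0 by (simp add: abs_mult)
  also have "\<dots> \<le> (\<Sum>t=a..b. \<bar>gradf t (u t) $ k\<bar>)" by (rule sum_abs)
  also have "\<dots> \<le> (\<Sum>t=a..b. Ginf)"
    by (rule sum_mono) (use grad_bound box abn in auto)
  also have "\<dots> = real (b + 1 - a) * Ginf" by simp
  finally have "2 * lam \<le> real (b + 1 - a) * Ginf" .
  then have "4 * Ginf \<le> real (b + 1 - a) * Ginf" using lam2 by linarith
  then have len4: "real (b + 1 - a) \<ge> 4" using Gi1 by simp
  have kb: "1 \<le> i_s \<and> i_s \<le> i_t \<and> i_t \<le> n \<and> path_len u i_s i_t \<le> B / sqrt (real (i_t - i_s + 1))"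
    using key_bin_props[OF bin] B1 by auto
  have Lbin: "real (i_t - i_s + 1) \<ge> 4" using len4 ab abn by linarith
  have sq2: "sqrt (real (i_t - i_s + 1)) \<ge> 2"
    using real_sqrt_le_mono[OF Lbin] by simp
  have "B / sqrt (real (i_t - i_s + 1)) \<le> B / 2" by (rule divide_left_mono) (use sq2 B1 in auto)
  then have PL: "path_len u i_s i_t \<le> B / 2" using kb by linarith
  have close: "\<bar>u j $ k - u a $ k\<bar> \<le> B / 2" if j: "j \<in> {i_s..i_t}" for j
  proof (cases "a \<le> j")
    case True
    have "\<bar>u j $ k - u a $ k\<bar> \<le> path_len u a j" by (rule coord_diff_le[OF True])
    also have "\<dots> \<le> path_len u i_s i_t" by (rule path_len_mono) (use ab j in auto)
    finally show ?thesis using PL by linarith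
  next
    case False
    have "\<bar>u a $ k - u j $ k\<bar> \<le> path_len u j a" by (rule coord_diff_le) (use False in auto)
    also have "\<dots> \<le> path_len u i_s i_t" by (rule path_len_mono) (use ab abn j in auto)
    finally show ?thesis using PL by linarith
  qed
  have ne: "{i_s..i_t} \<noteq> {}" using kb by auto
  show ?thesis
  proof (cases "u a $ k \<ge> 0")
    case True
    have "gap_min u (-B) i_s i_t k \<ge> B / 2" unfolding gap_min_def
      using close True ne by (subst Min_ge_iff) (auto, smt (verit))
    then show ?thesis using mu by linarith
  next
    case False
    have "gap_min u B i_s i_t k \<ge> B / 2" unfolding gap_min_def
      using close False ne by (subst Min_ge_iff) (auto, smt (verit))
    then show ?thesis using mu by linarith
  qed
qed

end
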